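(* Every second-order polynomial has a polynomial majorant.
   Context: Second-order polynomials are the smallest class of functions $P\colon\mathbb N^{\mathbb N}\times\mathbb N\to\mathbb N$ that contains all $(l,n)\mapsto p(n)$ for polynomials $p$ with natural-number coefficients, and is closed under pointwise sum, pointwise product, and $P\mapsto P^+$ with $P^+(l,n)=l(P(l,n))$. A polynomial tree is a finite rooted tree in which each node is labeled by a polynomial in $\mathbb N[X_0,\ldots,X_k]$, $k$ being the number of children of that node, with the children of each node linearly ordered. Recursively assign functions to nodes: a leaf labeled $t$ gets $(l,n)\mapsto t(n)$; a node labeled $t$ with children (in order) assigned $P_1,\ldots,P_k$ gets $(l,n)\mapsto t(n,l(P_1(l,n)),\ldots,l(P_k(l,n)))$. The tree is a description of $P$ if $P$ is assigned to the root. A pair $(N,p)$ with $N\in\mathbb N$ and $p\colon\mathbb N\to\mathbb N$ is a majorant of $P$ if $p(n)\ge n$ for all $n$ and there is a description $T$ of $P$ such that $N$ is the height of $T$ and for every $n\in\mathbb N$ and every node $t$ of $T$ (with $k$ children) $p(n)\ge t(n,\ldots,n)$ (all $k+1$ variables set to $n$). It is a polynomial majorant if $p$ is a polynomial. *)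

theory Defs
  imports "HOL-Computational_Algebra.Polynomial"
begin

text \<open>Multivariate polynomials with natural-number coefficients, as syntactic
  expressions in the variables X_0, X_1, ...; every element of N[X_0,...,X_k]
  is denoted by some expression whose variables are among X_0..X_k.\<close>
datatype pexp = PConst nat | PVar nat | PAdd pexp pexp | PMul pexp pexp

fun peval :: "(nat \<Rightarrow> nat) \<Rightarrow> pexp \<Rightarrow> nat" where
  "peval v (PConst c) = c"
| "peval v (PVar i) = v i"
| "peval v (PAdd a b) = peval v a + peval v b"
| "peval v (PMul a b) = peval v a * peval v b"

fun pvars :: "pexp \<Rightarrow> nat set" where
  "pvars (PConst c) = {}"
| "pvars (PVar i) = {i}"
| "pvars (PAdd a b) = pvars a \<union> pvars b"
| "pvars (PMul a b) = pvars a \<union> pvars b"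

datatype ptree = Node pexp "ptree list"

fun wf_ptree :: "ptree \<Rightarrow> bool" where
  "wf_ptree (Node t ts) = (pvars t \<subseteq> {0..length ts} \<and> (\<forall>c\<in>set ts. wf_ptree c))"

fun labels :: "ptree \<Rightarrow> pexp set" where
  "labels (Node t ts) = insert t (\<Union>c\<in>set ts. labels c)"

fun height :: "ptree \<Rightarrow> nat" where
  "height (Node t ts) = (if ts = [] then 0 else Suc (Max (set (map height ts))))"

text \<open>Valuation n, y_1, ..., y_k of the variables X_0, X_1, ..., X_k.\<close>
definition env :: "nat \<Rightarrow> nat list \<Rightarrow> nat \<Rightarrow> nat" where
  "env n ys i = (if i = 0 then n else ys ! (i - 1))"

fun tfun :: "ptree \<Rightarrow> (nat \<Rightarrow> nat) \<Rightarrow> nat \<Rightarrow> nat" where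
  "tfun (Node t ts) l n = peval (env n (map (\<lambda>c. l (tfun c l n)) ts)) t"

definition description :: "ptree \<Rightarrow> ((nat \<Rightarrow> nat) \<Rightarrow> nat \<Rightarrow> nat) \<Rightarrow> bool" where
  "description T P \<longleftrightarrow> wf_ptree T \<and> tfun T = P"

inductive_set sopoly :: "((nat \<Rightarrow> nat) \<Rightarrow> nat \<Rightarrow> nat) set" where
  poly: "(\<lambda>l n. poly (p :: nat poly) n) \<in> sopoly"
| add: "P \<in> sopoly \<Longrightarrow> Q \<in> sopoly \<Longrightarrow> (\<lambda>l n. P l n + Q l n) \<in> sopoly"
| mult: "P \<in> sopoly \<Longrightarrow> Q \<in> sopoly \<Longrightarrow> (\<lambda>l n. P l n * Q l n) \<in> sopoly"
| plus: "P \<in> sopoly \<Longrightarrow> (\<lambda>l n. l (P l n)) \<in> sopoly"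

definition majorant :: "nat \<Rightarrow> (nat \<Rightarrow> nat) \<Rightarrow> ((nat \<Rightarrow> nat) \<Rightarrow> nat \<Rightarrow> nat) \<Rightarrow> bool" where
  "majorant N p P \<longleftrightarrow> (\<forall>n. n \<le> p n) \<and>
     (\<exists>T. description T P \<and> height T = N \<and>
          (\<forall>n. \<forall>t\<in>labels T. peval (\<lambda>_. n) t \<le> p n))"

definition poly_majorant :: "nat \<Rightarrow> (nat \<Rightarrow> nat) \<Rightarrow> ((nat \<Rightarrow> nat) \<Rightarrow> nat \<Rightarrow> nat) \<Rightarrow> bool" where
  "poly_majorant N p P \<longleftrightarrow> majorant N p P \<and> (\<exists>q :: nat poly. p = poly q)"

end

theory Submission
  imports Defs
begin

fun polyexp :: "nat list \<Rightarrow> pexp" where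
  "polyexp [] = PConst 0"
| "polyexp (c # cs) = PAdd (PConst c) (PMul (PVar 0) (polyexp cs))"

lemma polyexp_eval: "peval v (polyexp cs) = foldr (\<lambda>a b. a + v 0 * b) cs 0"
  by (induction cs) auto

lemma polyexp_vars: "pvars (polyexp cs) \<subseteq> {0}"
  by (induction cs) auto

lemma poly_foldr: "poly p x = foldr (\<lambda>a b. a + x * b) (coeffs p) 0"
  by (simp add: poly_def horner_sum_foldr)

fun shift :: "nat \<Rightarrow> pexp \<Rightarrow> pexp" where
  "shift k (PConst c) = PConst c"
| "shift k (PVar i) = PVar (if i = 0 then 0 else i + k)"
| "shift k (PAdd a b) = PAdd (shift k a) (shift k b)"
| "shift k (PMul a b) = PMul (shift k a) (shift k b)"

lemma shift_vars: "pvars (shift k t) = (\<lambda>i. if i = 0 then 0 else i + k) ` pvars t"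
  by (induction t) auto

lemma shift_eval: "peval v (shift k t) = peval (\<lambda>i. v (if i = 0 then 0 else i + k)) t"
  by (induction t) auto

lemma peval_cong: "(\<And>i. i \<in> pvars t \<Longrightarrow> v i = w i) \<Longrightarrow> peval v t = peval w t"
  by (induction t) auto

lemma eval_left:
  assumes "pvars t \<subseteq> {0..length ys1}"
  shows "peval (env n (ys1 @ ys2)) t = peval (env n ys1) t"
proof (rule peval_cong)
  fix i assume "i \<in> pvars t"
  with assms have "i \<le> length ys1" by auto
  then show "env n (ys1 @ ys2) i = env n ys1 i"
    by (auto simp: env_def nth_append)
qed

lemma eval_right:
  assumes "pvars t \<subseteq> {0..length ys2}" "k = length ys1"
  shows "peval (env n (ys1 @ ys2)) (shift k t) = peval (env n ys2) t"
  unfolding shift_eval assms(2)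
proof (rule peval_cong)
  fix i assume "i \<in> pvars t"
  with assms have "i \<le> length ys2" by auto
  then show "env n (ys1 @ ys2) (if i = 0 then 0 else i + length ys1) = env n ys2 i"
    by (auto simp: env_def nth_append)
qed

lemma vars_right:
  assumes "pvars t \<subseteq> {0..m}"
  shows "pvars (shift k t) \<subseteq> {0..k + m}"
  using assms unfolding shift_vars by auto

lemma desc_exists: "P \<in> sopoly \<Longrightarrow> \<exists>T. description T P"
proof (induction rule: sopoly.induct)
  case (poly p)
  have "description (Node (polyexp (coeffs p)) []) (\<lambda>l n. poly p n)"
    unfolding description_def using polyexp_vars[of "coeffs p"]
    by (auto simp: polyexp_eval poly_foldr env_def fun_eq_iff)
  then show ?case by blast
next
  case (add P Q)
  then obtain T1 T2 where d1: "description T1 P" and d2: "description T2 Q" by blast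
  obtain t1 ts1 where T1: "T1 = Node t1 ts1" by (cases T1)
  obtain t2 ts2 where T2: "T2 = Node t2 ts2" by (cases T2)
  have "description (Node (PAdd t1 (shift (length ts1) t2)) (ts1 @ ts2)) (\<lambda>l n. P l n + Q l n)"
    using d1 d2 unfolding description_def T1 T2
    using vars_right[of t2 "length ts2" "length ts1"]
    by (auto simp: fun_eq_iff eval_left eval_right)
  then show ?case by blast
next
  case (mult P Q)
  then obtain T1 T2 where d1: "description T1 P" and d2: "description T2 Q" by blast
  obtain t1 ts1 where T1: "T1 = Node t1 ts1" by (cases T1)
  obtain t2 ts2 where T2: "T2 = Node t2 ts2" by (cases T2)
  have "description (Node (PMul t1 (shift (length ts1) t2)) (ts1 @ ts2)) (\<lambda>l n. P l n * Q l n)"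
    using d1 d2 unfolding description_def T1 T2
    using vars_right[of t2 "length ts2" "length ts1"]
    by (auto simp: fun_eq_iff eval_left eval_right)
  then show ?case by blast
next
  case (plus P)
  then obtain T where d: "description T P" by blast
  have "description (Node (PVar 1) [T]) (\<lambda>l n. l (P l n))"
    using d unfolding description_def by (auto simp: fun_eq_iff env_def)
  then show ?case by blast
qed

lemma labels_finite: "finite (labels T)"
  by (induction T rule: labels.induct) auto

lemma peval_poly: "\<exists>q :: nat poly. \<forall>n. peval (\<lambda>_. n) e = poly q n"
proof (induction e)
  case (PConst c) then show ?case by (intro exI[of _ "[:c:]"]) auto
next
  case (PVar i) then show ?case by (intro exI[of _ "[:0,1:]"]) auto
next
  case (PAdd a b)
  then obtain qa qb where "\<forall>n. peval (\<lambda>_. n) a = poly qa n" "\<forall>n. peval (\<lambda>_. n) b = poly qb n" by blast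
  then show ?case by (intro exI[of _ "qa + qb"]) auto
next
  case (PMul a b)
  then obtain qa qb where "\<forall>n. peval (\<lambda>_. n) a = poly qa n" "\<forall>n. peval (\<lambda>_. n) b = poly qb n" by blast
  then show ?case by (intro exI[of _ "qa * qb"]) auto
qed

lemma bound_set: "finite S \<Longrightarrow> \<exists>q :: nat poly. \<forall>n. n \<le> poly q n \<and> (\<forall>e\<in>S. peval (\<lambda>_. n) e \<le> poly q n)"
proof (induction S rule: finite_induct)
  case empty then show ?case by (intro exI[of _ "[:0,1:]"]) auto
next
  case (insert e S)
  then obtain q where q: "\<forall>n. n \<le> poly q n \<and> (\<forall>e\<in>S. peval (\<lambda>_. n) e \<le> poly q n)" by blast
  obtain qe where qe: "\<forall>n. peval (\<lambda>_. n) e = poly qe n" using peval_poly by blast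
  show ?case
  proof (intro exI[of _ "q + qe"] allI conjI ballI)
    fix n show "n \<le> poly (q + qe) n" using q by (simp add: trans_le_add1)
  next
    fix n e' assume "e' \<in> insert e S"
    then show "peval (\<lambda>_. n) e' \<le> poly (q + qe) n" using q qe
      by (auto simp: trans_le_add1)
  qed
qed

theorem mainTheorem4:
  assumes "P \<in> sopoly"
  shows "\<exists>N p. poly_majorant N p P"
proof -
  obtain T where d: "description T P" using desc_exists[OF assms] by blast
  obtain q :: "nat poly" where q: "\<forall>n. n \<le> poly q n \<and> (\<forall>e\<in>labels T. peval (\<lambda>_. n) e \<le> poly q n)"
    using bound_set[OF labels_finite] by blast
  have "poly_majorant (height T) (poly q) P"
    unfolding poly_majorant_def majorant_def using d q by blast
  then show ?thesis by blast
qed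

end
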